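(* Let $\mathbf{P}\subset\mathbb{C}$ be a Jordan arc and let $A\colon\mathbf{P}\to\mathbb{C}^{n\times n}$ and $b\colon\mathbf{P}\to\mathbb{C}^{n}$ be continuous such that $(A(\theta),b(\theta))$ is reachable for every $\theta\in\mathbf{P}$ (i.e. $\operatorname{rank}(b(\theta),A(\theta)b(\theta),\dots,A(\theta)^{n-1}b(\theta))=n$). Then there exists a continuous row vector $f\colon\mathbf{P}\to\mathbb{C}^{1\times n}$ such that the pair $(A+bf,b)$ is uniformly ensemble reachable.
   Context: A Jordan arc is the image of a continuous injective map from a compact interval into $\mathbb{C}$. For continuous $A\colon\mathbf{P}\to\mathbb{C}^{n\times n}$, $B\colon\mathbf{P}\to\mathbb{C}^{n\times m}$, the pair $(A,B)$ is uniformly ensemble reachable (from zero) if for every continuous $f\colon\mathbf{P}\to\mathbb{C}^n$ and every $\varepsilon>0$ there exist $T>0$ and an input $u$ such that $\sup_{\theta\in\mathbf{P}}\|\varphi(T,0,u)(\theta)-f(\theta)\|<\varepsilon$. Here, for the continuous-time system $\partial_t x(t,\theta)=A(\theta)x(t,\theta)+B(\theta)u(t)$, $x(0,\theta)=0$, one takes $u\in L^1([0,T],\mathbb{C}^m)$ and $\varphi(T,0,u)(\theta)=\int_0^T e^{A(\theta)(T-s)}B(\theta)u(s)\,ds$; for the discrete-time system $x_{t+1}(\theta)=A(\theta)x_t(\theta)+B(\theta)u_t$, $x_0(\theta)=0$, one takes $T\in\mathbb{N}$, $u=(u_0,\dots,u_{T-1})$, $u_i\in\mathbb{C}^m$, and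 $\varphi(T,0,u)(\theta)=\sum_{k=0}^{T-1}A(\theta)^kB(\theta)u_{T-1-k}$. The result holds for either notion. The input $u$ is independent of $\theta$. *)

theory Defs
  imports "HOL-Analysis.Analysis"
begin

definition matpow :: "'a::semiring_1^'n^'n \<Rightarrow> nat \<Rightarrow> 'a^'n^'n" where
  "matpow A k = ((\<lambda>M. M ** A) ^^ k) (mat 1)"

definition matexp :: "complex^'n^'n \<Rightarrow> complex^'n^'n" where
  "matexp M = (\<Sum>k. (1 / fact k) *\<^sub>R matpow M k)"

text \<open>Reachability of a single-input pair (A,b): the Kalman matrix
  (b, Ab, ..., A^(n-1) b) has rank n, i.e. its column space
  (spanned by the vectors A^k b, k < n) has dimension n.\<close>
definition reachable_pair :: "complex^'n^'n \<Rightarrow> complex^'n \<Rightarrow> bool" where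
  "reachable_pair A b \<longleftrightarrow> vec.dim {matpow A k *v b | k. k < CARD('n)} = CARD('n)"

definition outer :: "complex^'n \<Rightarrow> complex^'n \<Rightarrow> complex^'n^'n" where
  "outer b f = (\<chi> i j. b $ i * f $ j)"

text \<open>Endpoint of the continuous-time system from zero with scalar input u on [0,T].\<close>
definition ct_endpoint :: "complex^'n^'n \<Rightarrow> complex^'n \<Rightarrow> real \<Rightarrow> (real \<Rightarrow> complex) \<Rightarrow> complex^'n" where
  "ct_endpoint A b T u = integral {0..T} (\<lambda>s. u s *s (matexp ((T - s) *\<^sub>R A) *v b))"

text \<open>Endpoint of the discrete-time system from zero with inputs u_0,...,u_(T-1).\<close>
definition dt_endpoint :: "complex^'n^'n \<Rightarrow> complex^'n \<Rightarrow> nat \<Rightarrow> (nat \<Rightarrow> complex) \<Rightarrow> complex^'n" where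
  "dt_endpoint A b T u = (\<Sum>k<T. u (T - 1 - k) *s (matpow A k *v b))"

definition UER_ct :: "complex set \<Rightarrow> (complex \<Rightarrow> complex^'n^'n) \<Rightarrow> (complex \<Rightarrow> complex^'n) \<Rightarrow> bool" where
  "UER_ct P A b \<longleftrightarrow>
     (\<forall>g::complex \<Rightarrow> complex^'n. continuous_on P g \<longrightarrow>
        (\<forall>\<epsilon>>0. \<exists>T>0. \<exists>u. u absolutely_integrable_on {0..T} \<and>
           (SUP \<theta>\<in>P. norm (ct_endpoint (A \<theta>) (b \<theta>) T u - g \<theta>)) < \<epsilon>))"

definition UER_dt :: "complex set \<Rightarrow> (complex \<Rightarrow> complex^'n^'n) \<Rightarrow> (complex \<Rightarrow> complex^'n) \<Rightarrow> bool" where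
  "UER_dt P A b \<longleftrightarrow>
     (\<forall>g::complex \<Rightarrow> complex^'n. continuous_on P g \<longrightarrow>
        (\<forall>\<epsilon>>0. \<exists>T::nat. \<exists>u::nat \<Rightarrow> complex.
           (SUP \<theta>\<in>P. norm (dt_endpoint (A \<theta>) (b \<theta>) T u - g \<theta>)) < \<epsilon>))"

end

theory Submission
  imports Defs "HOL-Computational_Algebra.Polynomial"
begin

lemma mv_smult: "(M::complex^'n^'m) *v (c *s x) = c *s (M *v x)"
  by (simp add: vec_eq_iff matrix_vector_mult_def sum_distrib_left algebra_simps)

lemma mv_add: "(M::complex^'n^'m) *v (x + y) = M *v x + M *v y"
  by (simp add: matrix_vector_right_distrib)

lemma mv_diff: "(M::complex^'n^'m) *v (x - y) = M *v x - M *v y"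
  by (simp add: vec_eq_iff matrix_vector_mult_def sum_subtractf algebra_simps)

lemma mv_sum: "(M::complex^'n^'m) *v (\<Sum>k\<in>S. v k) = (\<Sum>k\<in>S. M *v v k)"
  by (induction S rule: infinite_finite_induct) (auto simp: mv_add)

lemma mv_addM: "((M::complex^'n^'m) + N) *v x = M *v x + N *v x"
  by (simp add: vec_eq_iff matrix_vector_mult_def sum.distrib algebra_simps)

lemma matpow_0[simp]: "matpow A 0 = mat 1"
  by (simp add: matpow_def)

lemma matpow_Suc: "matpow A (Suc k) = matpow A k ** A"
  by (simp add: matpow_def)

lemma matpow_Suc': "matpow (A::'a::semiring_1^'n^'n) (Suc k) = A ** matpow A k"
proof (induction k)
  case 0 then show ?case by (simp add: matpow_Suc)
next
  case (Suc k)
  have "matpow A (Suc (Suc k)) = matpow A (Suc k) ** A" by (simp add: matpow_Suc)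
  also have "\<dots> = A ** matpow A k ** A" using Suc by simp
  also have "\<dots> = A ** matpow A (Suc k)" by (simp add: matpow_Suc matrix_mul_assoc)
  finally show ?case .
qed

lemma matpow_mv_Suc: "matpow (A::complex^'n^'n) (Suc k) *v v = matpow A k *v (A *v v)"
  by (simp add: matpow_Suc matrix_vector_mul_assoc)

lemma matpow_mv_Suc': "matpow (A::complex^'n^'n) (Suc k) *v v = A *v (matpow A k *v v)"
  by (simp add: matpow_Suc' matrix_vector_mul_assoc)

lemma matpow_eigen:
  assumes "(A::complex^'n^'n) *v u = l *s u"
  shows "matpow A k *v u = (l ^ k) *s u"
  by (induction k) (auto simp: matpow_mv_Suc' assms mv_smult vector_smult_assoc mult.commute)

definition pvv :: "complex poly \<Rightarrow> complex^'n^'n \<Rightarrow> complex^'n \<Rightarrow> complex^'n" where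
  "pvv p A v = (\<Sum>i\<le>degree p. coeff p i *s (matpow A i *v v))"

lemma pvv_bound:
  assumes "degree p < m"
  shows "pvv p A v = (\<Sum>i<m. coeff p i *s (matpow A i *v v))"
  unfolding pvv_def using assms
  by (intro sum.mono_neutral_right[symmetric]) (auto simp: coeff_eq_0)

lemma pvv_add: "pvv (p + q) A v = pvv p A v + pvv q A v"
proof -
  define m where "m = Suc (max (degree p) (degree q))"
  have "degree (p+q) < m" "degree p < m" "degree q < m"
    using degree_add_le_max[of p q] by (auto simp: m_def)
  then show ?thesis
    by (simp add: pvv_bound[of _ m] sum.distrib vector_sadd_rdistrib)
qed

lemma pvv_smult: "pvv (smult c p) A v = c *s pvv p A v"
proof -
  have "degree (smult c p) < Suc (degree p)" "degree p < Suc (degree p)"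
    using degree_smult_le[of c p] by auto
  then show ?thesis
    by (simp add: pvv_bound[of _ "Suc (degree p)"] vec_eq_iff sum_distrib_left algebra_simps)
qed

lemma pvv_diff: "pvv (p - q) A v = pvv p A v - pvv q A v"
  using pvv_add[of "p - q" q A v] by simp

lemma pvv_0[simp]: "pvv 0 A v = 0"
  by (simp add: pvv_def)

lemma pvv_sum: "pvv (\<Sum>k\<in>S. p k) A v = (\<Sum>k\<in>S. pvv (p k) A v)"
  by (induction S rule: infinite_finite_induct) (auto simp: pvv_add)

lemma pvv_vadd: "pvv p A (x + y) = pvv p A x + pvv p A y"
  by (simp add: pvv_def mv_add sum.distrib vec_eq_iff algebra_simps)

lemma pvv_vsmult: "pvv p A (c *s x) = c *s pvv p A x"
  by (simp add: pvv_def mv_smult vec_eq_iff sum_distrib_left algebra_simps)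

lemma pvv_vzero[simp]: "pvv p A 0 = 0"
  by (simp add: pvv_def)

lemma pvv_vsum: "pvv p A (\<Sum>k\<in>S. x k) = (\<Sum>k\<in>S. pvv p A (x k))"
  by (induction S rule: infinite_finite_induct) (auto simp: pvv_vadd)

lemma pvv_const: "pvv [:c:] A v = c *s v"
  by (simp add: pvv_def)

lemma pvv_shift: "pvv p A (A *v v) = A *v pvv p A v"
  by (simp add: pvv_def mv_sum mv_smult matpow_mv_Suc[symmetric] matpow_mv_Suc'[symmetric])

lemma pvv_pCons: "pvv (pCons a p) A v = a *s v + pvv p A (A *v v)"
proof -
  define m where "m = Suc (degree p)"
  have d1: "degree (pCons a p) < Suc m" and d2: "degree p < m"
    by (auto simp: m_def degree_pCons_le le_less_trans)
  have "pvv (pCons a p) A v = (\<Sum>i<Suc m. coeff (pCons a p) i *s (matpow A i *v v))"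
    by (rule pvv_bound[OF d1])
  also have "\<dots> = a *s v + (\<Sum>i<m. coeff p i *s (matpow A (Suc i) *v v))"
    by (subst sum.lessThan_Suc_shift) simp
  also have "\<dots> = a *s v + pvv p A (A *v v)"
    by (simp add: pvv_bound[OF d2] matpow_mv_Suc)
  finally show ?thesis .
qed

lemma pvv_mult: "pvv (p * q) A v = pvv p A (pvv q A v)"
proof (induction p arbitrary: v)
  case 0 then show ?case by simp
next
  case (pCons a p)
  have "pCons a p * q = smult a q + pCons 0 (p * q)" by simp
  then have "pvv (pCons a p * q) A v = a *s pvv q A v + pvv (p*q) A (A *v v)"
    by (simp add: pvv_add pvv_smult pvv_pCons)
  also have "\<dots> = a *s pvv q A v + pvv p A (A *v pvv q A v)"
    using pCons.IH by (simp add: pvv_shift)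
  also have "\<dots> = pvv (pCons a p) A (pvv q A v)"
    by (simp add: pvv_pCons)
  finally show ?case .
qed

lemma pvv_lin: "pvv [:-l, 1:] A v = A *v v - l *s v"
  by (simp add: pvv_pCons pvv_const pvv_def matpow_Suc)


lemma krylov_zero:
  fixes A :: "complex^'n^'n"
  assumes reach: "reachable_pair A b" and z: "pvv p A b = 0" and d: "degree p < CARD('n)"
  shows "p = 0"
proof -
  define N where "N = CARD('n)"
  define w where "w = (\<lambda>k. matpow A k *v b)"
  define S where "S = w ` {..<N}"
  have SS: "{matpow A k *v b | k. k < CARD('n)} = S"
    by (auto simp: S_def w_def N_def)
  have dimS: "vec.dim S = N" using reach by (simp add: reachable_pair_def SS N_def)
  have fin: "finite S" by (simp add: S_def)
  have c1: "card S \<le> N" unfolding S_def using card_image_le[of "{..<N}" w] by simp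
  have c2: "vec.dim S \<le> card S" using vec.dim_le_card'[OF fin] .
  have cS: "card S = N" using c1 c2 dimS by simp
  have ind: "vec.independent S"
    using vec.card_eq_dim[of S S] cS dimS fin vec.span_superset by auto
  have inj: "inj_on w {..<N}"
    using cS unfolding S_def by (intro eq_card_imp_inj_on) auto
  have "pvv p A b = (\<Sum>i<N. coeff p i *s w i)"
    using d by (simp add: pvv_bound N_def w_def)
  also have "\<dots> = (\<Sum>v\<in>S. coeff p (the_inv_into {..<N} w v) *s v)"
    unfolding S_def using inj
    by (subst sum.reindex) (auto simp: the_inv_into_f_f)
  finally have e: "(\<Sum>v\<in>S. coeff p (the_inv_into {..<N} w v) *s v) = 0" using z by simp
  have imp: "\<forall>c. (\<Sum>v\<in>S. c v *s v) = 0 \<longrightarrow> (\<forall>v\<in>S. c v = 0)"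
    using ind by (simp add: vec.independent_explicit)
  have "\<forall>v\<in>S. coeff p (the_inv_into {..<N} w v) = 0"
    using imp[rule_format, OF e] by blast
  then have "\<forall>i<N. coeff p i = 0"
    using inj by (auto simp: S_def the_inv_into_f_f)
  then show ?thesis
    using d by (intro poly_eqI) (metis N_def coeff_0 coeff_eq_0 le_less_trans not_less)
qed

definition QQ :: "('n \<Rightarrow> complex) \<Rightarrow> 'n set \<Rightarrow> complex poly" where
  "QQ lam S = (\<Prod>j\<in>S. [:- lam j, 1:])"

lemma QQ_degree: "degree (QQ lam S) \<le> card S"
proof (cases "finite S")
  case True
  then have "degree (QQ lam S) \<le> sum (degree \<circ> (\<lambda>j. [:- lam j, 1:])) S"
    unfolding QQ_def by (rule degree_prod_sum_le)
  then show ?thesis by simp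
next
  case False then show ?thesis by (simp add: QQ_def)
qed

lemma QQ_degree_eq: "finite S \<Longrightarrow> degree (QQ lam S) = card S"
  unfolding QQ_def by (subst degree_prod_eq_sum_degree) auto

lemma QQ_lead: "lead_coeff (QQ lam S) = 1"
  unfolding QQ_def by (simp add: lead_coeff_prod)

lemma QQ_poly: "poly (QQ lam S) x = (\<Prod>j\<in>S. x - lam j)"
  unfolding QQ_def by (simp add: poly_prod)

lemma QQ_remove:
  assumes "finite S" "k \<in> S"
  shows "QQ lam S = QQ lam (S - {k}) * [:- lam k, 1:]"
  unfolding QQ_def using assms by (simp add: prod.remove mult.commute)

lemma QQ_apply:
  fixes A :: "complex^'n^'n"
  assumes eig: "A *v u - l k *s u = b" and "finite S" "k \<in> S"
  shows "pvv (QQ l S) A u = pvv (QQ l (S - {k})) A b"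
  by (simp only: QQ_remove[OF assms(2,3)] pvv_mult pvv_lin assms(1))

lemma resolvent_indep:
  fixes A :: "complex^'n^'n" and lam :: "'n \<Rightarrow> complex" and u :: "'n \<Rightarrow> complex^'n"
  assumes reach: "reachable_pair A b" and inj: "inj lam"
    and eig: "\<And>k. A *v u k - lam k *s u k = b"
    and sum0: "(\<Sum>k\<in>UNIV. a k *s u k) = 0"
  shows "a m = 0"
proof -
  define R where "R = (\<Sum>k\<in>UNIV. smult (a k) (QQ lam (UNIV - {k})))"
  have "pvv R A b = (\<Sum>k\<in>UNIV. a k *s pvv (QQ lam (UNIV - {k})) A b)"
    by (simp add: R_def pvv_sum pvv_smult)
  also have "\<dots> = (\<Sum>k\<in>UNIV. a k *s pvv (QQ lam UNIV) A (u k))"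
  proof (intro sum.cong refl)
    fix k :: 'n
    show "a k *s pvv (QQ lam (UNIV - {k})) A b = a k *s pvv (QQ lam UNIV) A (u k)"
      using QQ_apply[of A "u k" lam k b UNIV] eig[of k] by simp
  qed
  also have "\<dots> = pvv (QQ lam UNIV) A (\<Sum>k\<in>UNIV. a k *s u k)"
    by (simp add: pvv_vsum pvv_vsmult)
  finally have z: "pvv R A b = 0" using sum0 by simp
  have "degree R < CARD('n)"
  proof -
    have "degree R \<le> CARD('n) - 1"
      unfolding R_def
      by (intro degree_sum_le) (auto intro: order.trans[OF degree_smult_le] order.trans[OF QQ_degree]
          simp: card_Diff_singleton)
    moreover have "CARD('n) > 0" by simp
    ultimately show ?thesis by linarith
  qed
  with z reach have R0: "R = 0" using krylov_zero by blast
  have "poly R (lam m) = (\<Sum>k\<in>UNIV. a k * (\<Prod>j\<in>UNIV - {k}. lam m - lam j))"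
    by (simp add: R_def poly_sum QQ_poly)
  also have "\<dots> = a m * (\<Prod>j\<in>UNIV - {m}. lam m - lam j)"
  proof (rule sum.mono_neutral_right[of UNIV "{m}", simplified])
    show "\<forall>i\<in>UNIV - {m}. a i * (\<Prod>j\<in>UNIV - {i}. lam m - lam j) = 0"
      by (auto intro!: prod_zero)
  qed
  finally have "a m * (\<Prod>j\<in>UNIV - {m}. lam m - lam j) = 0" using R0 by simp
  moreover have "(\<Prod>j\<in>UNIV - {m}. lam m - lam j) \<noteq> 0"
    using inj by (auto simp: inj_def)
  ultimately show ?thesis by simp
qed

lemma resolvent_coeff_nz:
  fixes A :: "complex^'n^'n" and lam :: "'n \<Rightarrow> complex" and u :: "'n \<Rightarrow> complex^'n"
  assumes reach: "reachable_pair A b" and inj: "inj lam"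
    and eig: "\<And>k. A *v u k - lam k *s u k = b"
    and sumb: "(\<Sum>k\<in>UNIV. mu k *s u k) = b"
  shows "mu m \<noteq> 0"
proof
  assume m0: "mu m = 0"
  define N where "N = CARD('n)"
  define R where "R = QQ lam (UNIV - {m}) - (\<Sum>k\<in>UNIV - {m}. smult (mu k) (QQ lam (UNIV - {m} - {k})))"
  have bsum: "b = (\<Sum>k\<in>UNIV - {m}. mu k *s u k)"
  proof -
    have "(\<Sum>k\<in>UNIV. mu k *s u k) = (\<Sum>k\<in>UNIV - {m}. mu k *s u k)"
      using m0 by (intro sum.mono_neutral_right) auto
    then show ?thesis using sumb by simp
  qed
  have "pvv (QQ lam (UNIV - {m})) A b = (\<Sum>k\<in>UNIV - {m}. mu k *s pvv (QQ lam (UNIV - {m})) A (u k))"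
    by (subst bsum) (simp add: pvv_vsum pvv_vsmult)
  also have "\<dots> = (\<Sum>k\<in>UNIV - {m}. mu k *s pvv (QQ lam (UNIV - {m} - {k})) A b)"
  proof (intro sum.cong refl)
    fix k assume "k \<in> UNIV - {m}"
    then show "mu k *s pvv (QQ lam (UNIV - {m})) A (u k) = mu k *s pvv (QQ lam (UNIV - {m} - {k})) A b"
      using QQ_apply[of A "u k" lam k b "UNIV - {m}"] eig[of k] by simp
  qed
  finally have z: "pvv R A b = 0"
    unfolding R_def pvv_diff pvv_sum pvv_smult by simp
  have dQ: "degree (QQ lam (UNIV - {m})) = N - 1"
    by (simp add: QQ_degree_eq card_Diff_singleton N_def)
  have dk: "degree (QQ lam (UNIV - {m} - {k})) < N - 1" if "k \<noteq> m" for k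
  proof -
    have "card (UNIV - {m} - {k}) = N - 2"
      using that by (simp add: card_Diff_singleton N_def)
    moreover have "N \<ge> 2"
    proof -
      have "card {m,k} \<le> N" unfolding N_def by (rule card_mono) auto
      then show ?thesis using that by simp
    qed
    ultimately show ?thesis using QQ_degree[of lam "UNIV - {m} - {k}"] by simp
  qed
  have Npos: "N \<ge> 1" unfolding N_def by (simp add: Suc_le_eq)
  have "degree R \<le> N - 1"
    unfolding R_def
  proof (intro degree_diff_le)
    show "degree (QQ lam (UNIV - {m})) \<le> N - 1" by (simp add: dQ)
    show "degree (\<Sum>k\<in>UNIV - {m}. smult (mu k) (QQ lam (UNIV - {m} - {k}))) \<le> N - 1"
    proof (intro degree_sum_le)
      fix k assume "k \<in> UNIV - {m}"
      then show "degree (smult (mu k) (QQ lam (UNIV - {m} - {k}))) \<le> N - 1"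
        using dk[of k] degree_smult_le[of "mu k" "QQ lam (UNIV - {m} - {k})"] by simp
    qed simp
  qed
  then have "degree R < CARD('n)" using Npos unfolding N_def by linarith
  with z reach have R0: "R = 0" using krylov_zero by blast
  have "coeff R (N - 1) = 1"
  proof -
    have "coeff (QQ lam (UNIV - {m})) (N - 1) = 1" using QQ_lead[of lam "UNIV - {m}"] dQ by simp
    moreover have "coeff (QQ lam (UNIV - {m} - {k})) (N - 1) = 0" if "k \<noteq> m" for k
      using dk[OF that] by (simp add: coeff_eq_0)
    ultimately show ?thesis by (simp add: R_def coeff_sum)
  qed
  with R0 show False by simp
qed


definition solve :: "complex^'n^'n \<Rightarrow> complex^'n \<Rightarrow> complex^'n" where
  "solve M v = (\<chi> k. det(\<chi> i j. if j=k then v$i else M$i$j) / det M)"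

lemma solve_correct:
  assumes "det (M::complex^'n^'n) \<noteq> 0"
  shows "M *v solve M v = v"
proof -
  obtain B where B: "M ** B = mat 1" "B ** M = mat 1"
    using assms unfolding invertible_det_nz[symmetric] invertible_def by blast
  have "M *v (B *v v) = v" by (simp add: matrix_vector_mul_assoc B)
  then show ?thesis using cramer[OF assms, of "B *v v" v] by (simp add: solve_def)
qed

lemma det_nz_if_inj:
  assumes "\<And>x. (M::complex^'n^'n) *v x = 0 \<Longrightarrow> x = 0"
  shows "det M \<noteq> 0"
proof -
  have "inj ((*v) M)"
  proof (rule injI)
    fix x y assume "M *v x = M *v y"
    then have "M *v (x - y) = 0" by (simp add: mv_diff)
    then have "x - y = 0" using assms by blast
    then show "x = y" by simp
  qed
  then show ?thesis
    using det_nz_iff_inj_gen[of "(*v) M"] matrix_vector_mul_linear_gen by simp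
qed

lemma continuous_on_det:
  assumes "\<And>i j. continuous_on S (\<lambda>x. M x $ i $ j :: complex)"
  shows "continuous_on S (\<lambda>x. det (M x :: complex^'n^'n))"
  unfolding det_def
  by (intro continuous_intros assms)

lemma continuous_on_entries:
  assumes "continuous_on S (M :: _ \<Rightarrow> complex^'n^'m)"
  shows "continuous_on S (\<lambda>x. M x $ i $ j)"
  by (intro continuous_intros assms)

lemma continuous_on_solve:
  assumes "continuous_on S M" "continuous_on S v" "\<And>x. x \<in> S \<Longrightarrow> det (M x :: complex^'n^'n) \<noteq> 0"
  shows "continuous_on S (\<lambda>x. solve (M x) (v x))"
proof -
  have c1: "continuous_on S (\<lambda>x. (\<chi> i j. if j = k then v x $ i else M x $ i $ j) $ i $ j)" for k i j
    by (cases "j = k") (auto intro!: continuous_intros assms)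
  have c2: "continuous_on S (\<lambda>x. M x $ i $ j)" for i j
    by (intro continuous_intros assms)
  show ?thesis unfolding solve_def
    by (intro continuous_on_vec_lambda continuous_on_divide continuous_on_det c1 c2) (use assms(3) in auto)
qed

definition nrm1 :: "complex^'n^'m \<Rightarrow> real" where
  "nrm1 M = (\<Sum>i\<in>UNIV. \<Sum>j\<in>UNIV. norm (M$i$j))"

lemma nrm1_nonneg: "nrm1 M \<ge> 0"
  by (simp add: nrm1_def sum_nonneg)

lemma norm_le_l1: "norm (x::'a::real_normed_vector^'n) \<le> (\<Sum>i\<in>UNIV. norm (x$i))"
  by (simp add: norm_vec_def L2_set_le_sum)

lemma norm_le_nrm1: "norm M \<le> nrm1 M"
proof -
  have "norm M \<le> (\<Sum>i\<in>UNIV. norm (M$i))" by (rule norm_le_l1)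
  also have "\<dots> \<le> nrm1 M" unfolding nrm1_def by (intro sum_mono norm_le_l1)
  finally show ?thesis .
qed

lemma nrm1_mult: "nrm1 ((M::complex^'k^'m) ** N) \<le> nrm1 M * nrm1 (N::complex^'n^'k)"
proof -
  have "nrm1 (M ** N) = (\<Sum>i\<in>UNIV. \<Sum>j\<in>UNIV. norm (\<Sum>k\<in>UNIV. M$i$k * N$k$j))"
    by (simp add: nrm1_def matrix_matrix_mult_def)
  also have "\<dots> \<le> (\<Sum>i\<in>UNIV. \<Sum>j\<in>UNIV. \<Sum>k\<in>UNIV. norm (M$i$k) * norm (N$k$j))"
    by (intro sum_mono order.trans[OF norm_sum]) (simp add: norm_mult)
  also have "\<dots> = (\<Sum>i\<in>UNIV. \<Sum>k\<in>UNIV. norm (M$i$k) * (\<Sum>j\<in>UNIV. norm (N$k$j)))"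
    by (rule sum.cong[OF refl], subst sum.swap, simp add: sum_distrib_left)
  also have "\<dots> \<le> (\<Sum>i\<in>UNIV. \<Sum>k\<in>UNIV. norm (M$i$k) * nrm1 N)"
  proof -
    have r: "(\<Sum>j\<in>UNIV. norm (N$k$j)) \<le> nrm1 N" for k
      unfolding nrm1_def
      by (rule member_le_sum[where f="\<lambda>k. \<Sum>j\<in>UNIV. norm (N$k$j)"]) (auto intro: sum_nonneg)
    show ?thesis by (intro sum_mono mult_left_mono r) auto
  qed
  also have "\<dots> = nrm1 M * nrm1 N"
    by (simp add: nrm1_def sum_distrib_right)
  finally show ?thesis .
qed

lemma nrm1_scaleR: "nrm1 (t *\<^sub>R (M::complex^'n^'m)) = \<bar>t\<bar> * nrm1 M"
  by (simp add: nrm1_def sum_distrib_left)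

lemma nrm1_matpow: "nrm1 (matpow (M::complex^'n^'n) k) \<le> CARD('n) * nrm1 M ^ k"
proof (induction k)
  case 0
  have "nrm1 (mat 1 :: complex^'n^'n) = (\<Sum>i\<in>(UNIV::'n set). 1)"
    unfolding nrm1_def mat_def
    by (intro sum.cong refl) (simp add: if_distrib sum.delta cong: if_cong)
  then show ?case by simp
next
  case (Suc k)
  have "nrm1 (matpow M (Suc k)) \<le> nrm1 (matpow M k) * nrm1 M"
    by (simp add: matpow_Suc nrm1_mult)
  also have "\<dots> \<le> CARD('n) * nrm1 M ^ k * nrm1 M"
    by (intro mult_right_mono Suc nrm1_nonneg)
  finally show ?case by (simp add: mult_ac)
qed

lemma matexp_summable:
  "summable (\<lambda>k. (1 / fact k) *\<^sub>R matpow (M::complex^'n^'n) k)"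
proof (rule summable_comparison_test')
  show "summable (\<lambda>k. CARD('n) * (inverse (fact k) * nrm1 M ^ k))"
    by (intro summable_mult summable_exp)
  fix k :: nat
  have "norm ((1 / fact k) *\<^sub>R matpow M k) = (1 / fact k) * norm (matpow M k)" by simp
  also have "\<dots> \<le> (1 / fact k) * (CARD('n) * nrm1 M ^ k)"
    by (intro mult_left_mono order.trans[OF norm_le_nrm1 nrm1_matpow]) auto
  finally show "norm ((1 / fact k) *\<^sub>R matpow M k) \<le> CARD('n) * (inverse (fact k) * nrm1 M ^ k)"
    by (simp add: field_simps)
qed

lemma eig_bound:
  assumes eq: "(M::complex^'n^'n) *v x = l *s x" and nz: "x \<noteq> 0"
  shows "norm l \<le> nrm1 M"
proof -
  have "Max (range (\<lambda>j. norm (x$j))) \<in> range (\<lambda>j. norm (x$j))"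
    by (intro Max_in) auto
  then obtain i where i0: "Max (range (\<lambda>j. norm (x$j))) = norm (x$i)"
    by blast
  note i = i0[symmetric]
  have mx: "norm (x$j) \<le> norm (x$i)" for j using i by simp
  have pos: "norm (x$i) > 0"
  proof (rule ccontr)
    assume "\<not> norm (x$i) > 0"
    then have "\<forall>j. norm (x$j) \<le> 0" using mx by (meson not_less order.trans)
    then have "\<forall>j. x$j = 0" by simp
    then show False using nz by (simp add: vec_eq_iff)
  qed
  have "norm l * norm (x$i) = norm ((M *v x)$i)" using eq by (simp add: norm_mult)
  also have "\<dots> = norm (\<Sum>j\<in>UNIV. M$i$j * x$j)" by (simp add: matrix_vector_mult_def)
  also have "\<dots> \<le> (\<Sum>j\<in>UNIV. norm (M$i$j) * norm (x$i))"
    by (intro order.trans[OF norm_sum] sum_mono) (simp add: norm_mult mult_left_mono mx)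
  also have "\<dots> = (\<Sum>j\<in>UNIV. norm (M$i$j)) * norm (x$i)" by (simp add: sum_distrib_right)
  also have "\<dots> \<le> nrm1 M * norm (x$i)"
    unfolding nrm1_def
    by (intro mult_right_mono member_le_sum[of i UNIV "\<lambda>i. \<Sum>j\<in>UNIV. norm (M$i$j)"]) (auto intro: sum_nonneg)
  finally show ?thesis using pos by simp
qed

lemma norm_smult_vec: "norm (c *s (x::complex^'n)) = norm c * norm x"
  by (simp add: norm_vec_def L2_set_right_distrib norm_mult)


lemma mat_mv: "(mat l :: complex^'n^'n) *v x = l *s x"
proof -
  have "(\<Sum>j\<in>UNIV. (if i = j then l else 0) * x$j) = l * x$i" for i
  proof -
    have "(\<Sum>j\<in>UNIV. (if i = j then l else 0) * x$j) = (\<Sum>j\<in>UNIV. if i = j then l * x$j else 0)"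
      by (rule sum.cong) auto
    then show ?thesis by simp
  qed
  then show ?thesis by (simp add: vec_eq_iff matrix_vector_mult_def mat_def)
qed

lemma mv_diffM: "((M::complex^'n^'m) - N) *v x = M *v x - N *v x"
  by (simp add: vec_eq_iff matrix_vector_mult_def sum_subtractf algebra_simps)

lemma outer_mv: "outer b f *v x = (\<Sum>j\<in>UNIV. f$j * x$j) *s b"
  by (simp add: vec_eq_iff outer_def matrix_vector_mult_def sum_distrib_left mult_ac)

definition uu :: "complex^'n^'n \<Rightarrow> complex^'n \<Rightarrow> ('n \<Rightarrow> complex) \<Rightarrow> 'n \<Rightarrow> complex^'n" where
  "uu A b lam k = solve (A - mat (lam k)) b"

definition UU :: "complex^'n^'n \<Rightarrow> complex^'n \<Rightarrow> ('n \<Rightarrow> complex) \<Rightarrow> complex^'n^'n" where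
  "UU A b lam = (\<chi> i k. uu A b lam k $ i)"

definition ff :: "complex^'n^'n \<Rightarrow> complex^'n \<Rightarrow> ('n \<Rightarrow> complex) \<Rightarrow> complex^'n" where
  "ff A b lam = solve (transpose (UU A b lam)) (vec (-1))"

definition mm :: "complex^'n^'n \<Rightarrow> complex^'n \<Rightarrow> ('n \<Rightarrow> complex) \<Rightarrow> complex^'n" where
  "mm A b lam = solve (UU A b lam) b"

lemma UU_mv: "UU A b lam *v a = (\<Sum>k\<in>UNIV. (a$k) *s uu A b lam k)"
  by (simp add: vec_eq_iff UU_def matrix_vector_mult_def mult.commute)

lemma det_shift_nz:
  assumes "norm l > nrm1 (A::complex^'n^'n)"
  shows "det (A - mat l) \<noteq> 0"
proof (rule det_nz_if_inj, rule ccontr)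
  fix x assume x: "(A - mat l) *v x = 0" "x \<noteq> 0"
  then have "A *v x = l *s x"
    by (simp add: mv_diffM mat_mv)
  then have "norm l \<le> nrm1 A" using eig_bound x(2) by blast
  then show False using assms by simp
qed

locale setting =
  fixes A :: "complex^'n^'n" and b :: "complex^'n" and lam :: "'n \<Rightarrow> complex"
  assumes reach: "reachable_pair A b" and inj: "inj lam" and big: "\<And>k. norm (lam k) > nrm1 A"
begin

abbreviation "u \<equiv> uu A b lam"
abbreviation "U \<equiv> UU A b lam"
abbreviation "f \<equiv> ff A b lam"
abbreviation "mu \<equiv> mm A b lam"
abbreviation "At \<equiv> A + outer b f"

lemma eig: "A *v u k - lam k *s u k = b"
proof -
  have "(A - mat (lam k)) *v u k = b"
    unfolding uu_def by (rule solve_correct[OF det_shift_nz[OF big]])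
  then show ?thesis
    by (simp add: mv_diffM mat_mv)
qed

lemma U_nz: "det U \<noteq> 0"
proof (rule det_nz_if_inj)
  fix a assume "U *v a = 0"
  then have "(\<Sum>k\<in>UNIV. (a$k) *s u k) = 0" by (simp add: UU_mv)
  then have "\<And>m. a$m = 0" using resolvent_indep[OF reach inj eig] by blast
  then show "a = 0" by (simp add: vec_eq_iff)
qed

lemma mu_sum: "(\<Sum>k\<in>UNIV. (mu$k) *s u k) = b"
  using solve_correct[OF U_nz, of b] by (simp add: UU_mv mm_def)

lemma mu_nz: "mu$k \<noteq> 0"
  using resolvent_coeff_nz[OF reach inj eig, of "\<lambda>k. mu$k"] mu_sum by blast

lemma f_u: "(\<Sum>j\<in>UNIV. f$j * u k $ j) = -1"
proof -
  have "transpose U *v f = vec (-1)"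
    unfolding ff_def by (rule solve_correct) (simp add: U_nz)
  then have "(transpose U *v f) $ k = -1" by simp
  then have "(\<Sum>j\<in>UNIV. u k $ j * f $ j) = -1"
    by (simp add: matrix_vector_mult_def transpose_def UU_def)
  then show ?thesis by (simp add: mult.commute)
qed

lemma At_eig: "At *v u k = lam k *s u k"
proof -
  have "At *v u k = A *v u k + (\<Sum>j\<in>UNIV. f$j * u k $ j) *s b"
    by (simp add: mv_addM outer_mv)
  also have "\<dots> = A *v u k - b" using f_u by (simp add: vector_sneg_minus1[symmetric])
  also have "\<dots> = lam k *s u k" using eig[of k] by (simp add: algebra_simps)
  finally show ?thesis .
qed

lemma pow_b: "matpow At j *v b = (\<Sum>k\<in>UNIV. (mu$k * lam k ^ j) *s u k)"
proof -
  have "matpow At j *v b = (\<Sum>k\<in>UNIV. matpow At j *v ((mu$k) *s u k))"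
    by (subst mu_sum[symmetric]) (simp add: mv_sum)
  also have "\<dots> = (\<Sum>k\<in>UNIV. (mu$k * lam k ^ j) *s u k)"
    by (simp add: mv_smult matpow_eigen[OF At_eig] vector_smult_assoc)
  finally show ?thesis .
qed

lemma dt_formula:
  "dt_endpoint At b T w = (\<Sum>k\<in>UNIV. (mu$k * (\<Sum>j<T. w (T - 1 - j) * lam k ^ j)) *s u k)"
proof -
  have "dt_endpoint At b T w = (\<Sum>j<T. \<Sum>k\<in>UNIV. (w (T - 1 - j) * (mu$k * lam k ^ j)) *s u k)"
    unfolding dt_endpoint_def pow_b
    by (simp add: scalar_mult_eq_scaleR[symmetric] vec_eq_iff sum_distrib_left mult_ac)
  also have "\<dots> = (\<Sum>k\<in>UNIV. (mu$k * (\<Sum>j<T. w (T - 1 - j) * lam k ^ j)) *s u k)"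
    by (subst sum.swap) (simp add: vec_eq_iff sum_distrib_left sum_distrib_right mult_ac)
  finally show ?thesis .
qed

end


lemma cs: "r *\<^sub>R (z::complex) = of_real r * z"
  by (rule scaleR_conv_of_real)

lemma bl_mv: "bounded_linear (\<lambda>X::complex^'n^'n. X *v u)"
proof -
  have "linear (\<lambda>X::complex^'n^'n. X *v u)"
    by (rule linearI) (simp_all add: mv_addM vec_eq_iff matrix_vector_mult_def cs
        sum_distrib_left sum.distrib algebra_simps)
  then show ?thesis by (simp add: linear_conv_bounded_linear)
qed

lemma bl_sv: "bounded_linear (\<lambda>c::complex. (a * c) *s (v::complex^'n))"
proof -
  have "linear (\<lambda>c::complex. (a * c) *s (v::complex^'n))"
    by (rule linearI) (simp_all add: vec_eq_iff cs algebra_simps)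
  then show ?thesis by (simp add: linear_conv_bounded_linear)
qed

lemma scaleR_mv: "((t::real) *\<^sub>R (M::complex^'n^'n)) *v u = (of_real t) *s (M *v u)"
  by (simp add: vec_eq_iff matrix_vector_mult_def cs sum_distrib_left mult_ac)

lemma matexp_eig:
  assumes "(M::complex^'n^'n) *v u = l *s u"
  shows "matexp (t *\<^sub>R M) *v u = exp (of_real t * l) *s u"
proof -
  have e: "(t *\<^sub>R M) *v u = (of_real t * l) *s u"
    by (simp add: scaleR_mv assms vector_smult_assoc)
  have "matexp (t *\<^sub>R M) *v u = (\<Sum>k. ((1 / fact k) *\<^sub>R matpow (t *\<^sub>R M) k) *v u)"
    unfolding matexp_def by (rule bounded_linear.suminf[OF bl_mv matexp_summable])
  also have "\<dots> = (\<Sum>k. (1 * ((of_real t * l)^k /\<^sub>R fact k)) *s u)"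
  proof -
    have "((1 / fact k) *\<^sub>R matpow (t *\<^sub>R M) k) *v u = (1 * ((of_real t * l)^k /\<^sub>R fact k)) *s u" for k
    proof -
      have "((1 / fact k) *\<^sub>R matpow (t *\<^sub>R M) k) *v u = of_real (1 / fact k) *s (matpow (t *\<^sub>R M) k *v u)"
        by (rule scaleR_mv)
      also have "\<dots> = (1 * ((of_real t * l)^k /\<^sub>R fact k)) *s u"
        by (simp add: matpow_eigen[OF e] vector_smult_assoc cs mult_ac divide_inverse)
      finally show ?thesis .
    qed
    then show ?thesis by simp
  qed
  also have "\<dots> = (1 * exp (of_real t * l)) *s u"
    using bounded_linear.sums[OF bl_sv[of 1 u] exp_converges[of "of_real t * l"]]
    by (rule sums_unique[symmetric])
  finally show ?thesis by simp
qed

context setting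
begin

lemma exp_b: "matexp (t *\<^sub>R At) *v b = (\<Sum>k\<in>UNIV. (mu$k * exp (of_real t * lam k)) *s u k)"
proof -
  have "matexp (t *\<^sub>R At) *v b = (\<Sum>k\<in>UNIV. matexp (t *\<^sub>R At) *v ((mu$k) *s u k))"
    by (subst mu_sum[symmetric]) (simp add: mv_sum)
  also have "\<dots> = (\<Sum>k\<in>UNIV. (mu$k * exp (of_real t * lam k)) *s u k)"
    by (simp add: mv_smult matexp_eig[OF At_eig] vector_smult_assoc)
  finally show ?thesis .
qed

lemma ct_formula:
  assumes int: "\<And>k. (\<lambda>s. w s * exp (of_real (T - s) * lam k)) integrable_on {0..T}"
  shows "ct_endpoint At b T w =
     (\<Sum>k\<in>UNIV. (mu$k * integral {0..T} (\<lambda>s. w s * exp (of_real (T - s) * lam k))) *s u k)"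
proof -
  have "ct_endpoint At b T w =
      integral {0..T} (\<lambda>s. \<Sum>k\<in>UNIV. (mu$k * (w s * exp (of_real (T - s) * lam k))) *s u k)"
    unfolding ct_endpoint_def exp_b
    by (intro integral_cong) (simp add: vec_eq_iff sum_distrib_left mult_ac)
  also have "\<dots> = (\<Sum>k\<in>UNIV. integral {0..T} (\<lambda>s. (mu$k * (w s * exp (of_real (T - s) * lam k))) *s u k))"
  proof (rule integral_sum)
    fix k
    show "(\<lambda>s. (mu$k * (w s * exp (of_real (T - s) * lam k))) *s u k) integrable_on {0..T}"
      using integrable_linear[OF int[of k] bl_sv[of "mu$k" "u k"]] by (simp add: o_def)
  qed simp
  also have "\<dots> = (\<Sum>k\<in>UNIV. (mu$k * integral {0..T} (\<lambda>s. w s * exp (of_real (T - s) * lam k))) *s u k)"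
  proof (intro sum.cong refl)
    fix k
    show "integral {0..T} (\<lambda>s. (mu$k * (w s * exp (of_real (T - s) * lam k))) *s u k) =
      (mu$k * integral {0..T} (\<lambda>s. w s * exp (of_real (T - s) * lam k))) *s u k"
      using integral_linear[OF int[of k] bl_sv[of "mu$k" "u k"]] by (simp add: o_def)
  qed
  finally show ?thesis .
qed

end


lemma pad_sum:
  assumes "m \<le> n"
  shows "(\<Sum>i\<le>n. (if i \<le> m then a i else 0) * (x::'a::comm_ring_1)^i) = (\<Sum>i\<le>m. a i * x^i)"
  using assms by (intro sum.mono_neutral_cong_right) auto

lemma poly_approx:
  fixes H :: "real \<Rightarrow> complex"
  assumes K: "compact K" and H: "continuous_on K H" and e: "e > 0"
  obtains a n where "\<forall>x\<in>K. norm (H x - (\<Sum>i\<le>n. a i * of_real x ^ i)) < e"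
proof -
  have e2: "e / 2 > 0" using e by simp
  obtain g1 where g1: "real_polynomial_function g1" "\<And>x. x \<in> K \<Longrightarrow> \<bar>Re (H x) - g1 x\<bar> < e / 2"
    using Stone_Weierstrass_real_polynomial_function[OF K _ e2, of "\<lambda>x. Re (H x)"] H
    by (metis continuous_on_Re)
  obtain g2 where g2: "real_polynomial_function g2" "\<And>x. x \<in> K \<Longrightarrow> \<bar>Im (H x) - g2 x\<bar> < e / 2"
    using Stone_Weierstrass_real_polynomial_function[OF K _ e2, of "\<lambda>x. Im (H x)"] H
    by (metis continuous_on_Im)
  obtain a1 n1 where a1: "g1 = (\<lambda>x. \<Sum>i\<le>n1. a1 i * x^i)"
    using real_polynomial_function_imp_sum[OF g1(1)] by blast
  obtain a2 n2 where a2: "g2 = (\<lambda>x. \<Sum>i\<le>n2. a2 i * x^i)"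
    using real_polynomial_function_imp_sum[OF g2(1)] by blast
  define n where "n = n1 + n2"
  define p where "p = (\<lambda>i. if i \<le> n1 then a1 i else 0)"
  define q where "q = (\<lambda>i. if i \<le> n2 then a2 i else 0)"
  define a where "a = (\<lambda>i. complex_of_real (p i) + \<i> * complex_of_real (q i))"
  have s1: "g1 x = (\<Sum>i\<le>n. p i * x^i)" for x
    unfolding a1 p_def n_def by (rule pad_sum[symmetric]) simp
  have s2: "g2 x = (\<Sum>i\<le>n. q i * x^i)" for x
    unfolding a2 q_def n_def by (rule pad_sum[symmetric]) simp
  have sa: "(\<Sum>i\<le>n. a i * of_real x ^ i) = complex_of_real (g1 x) + \<i> * complex_of_real (g2 x)" for x
    unfolding s1 s2 a_def
    by (simp add: distrib_right sum.distrib sum_distrib_left mult.assoc)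
  show ?thesis
  proof (rule that, intro ballI)
    fix x assume x: "x \<in> K"
    have "norm (H x - (\<Sum>i\<le>n. a i * of_real x ^ i)) \<le> \<bar>Re (H x) - g1 x\<bar> + \<bar>Im (H x) - g2 x\<bar>"
      unfolding sa using cmod_le[of "H x - (complex_of_real (g1 x) + \<i> * complex_of_real (g2 x))"]
      by simp
    also have "\<dots> < e" using g1(2)[OF x] g2(2)[OF x] by simp
    finally show "norm (H x - (\<Sum>i\<le>n. a i * of_real x ^ i)) < e" .
  qed
qed

lemma glue:
  fixes idx :: "'n::finite \<Rightarrow> nat" and c :: "'n \<Rightarrow> real \<Rightarrow> complex" and L :: real
  assumes inj: "inj idx" and cc: "\<And>k. continuous_on {0..1} (c k)"
  shows "\<exists>H. continuous_on (\<Union>k. {L + 2 * real (idx k) .. L + 2 * real (idx k) + 1}) H \<and>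
            (\<forall>k. \<forall>\<tau>\<in>{0..1}. H (L + 2 * real (idx k) + \<tau>) = c k \<tau>)"
proof -
  define kk where "kk = (\<lambda>x::real. inv idx (nat \<lfloor>(x - L) / 2\<rfloor>))"
  define H where "H = (\<lambda>x. c (kk x) (x - L - 2 * real (idx (kk x))))"
  have kk: "kk x = k" if "x \<in> {L + 2 * real (idx k) .. L + 2 * real (idx k) + 1}" for x k
  proof -
    have "\<lfloor>(x - L) / 2\<rfloor> = int (idx k)"
      using that by (intro floor_unique) auto
    then show ?thesis unfolding kk_def using inj by (simp add: inv_f_f)
  qed
  have "continuous_on (\<Union>k. {L + 2 * real (idx k) .. L + 2 * real (idx k) + 1}) H"
  proof (rule continuous_on_closed_Union)
    fix k
    have "continuous_on {L + 2 * real (idx k) .. L + 2 * real (idx k) + 1} (\<lambda>x. c k (x - L - 2 * real (idx k)))"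
    proof (rule continuous_on_compose2[OF cc[of k]])
      show "continuous_on {L + 2 * real (idx k)..L + 2 * real (idx k) + 1} (\<lambda>x. x - L - 2 * real (idx k))"
        by (intro continuous_intros)
    qed auto
    then show "continuous_on {L + 2 * real (idx k) .. L + 2 * real (idx k) + 1} H"
      by (rule continuous_on_cong[THEN iffD1, rotated 2]) (auto simp: H_def kk)
  qed auto
  moreover have "\<forall>k. \<forall>\<tau>\<in>{0..1}. H (L + 2 * real (idx k) + \<tau>) = c k \<tau>"
  proof (intro allI ballI)
    fix k and \<tau> :: real assume "\<tau> \<in> {0..1}"
    then have "kk (L + 2 * real (idx k) + \<tau>) = k" by (intro kk) auto
    then show "H (L + 2 * real (idx k) + \<tau>) = c k \<tau>" by (simp add: H_def)
  qed
  ultimately show ?thesis by blast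
qed


lemma piece_integral:
  fixes l :: complex and T j :: real
  assumes l: "l \<noteq> 0"
  shows "((\<lambda>s. exp (of_real (T - s) * l)) has_integral
          (exp (of_real (T - j - 1) * l) * ((exp l - 1) / l))) {j..j+1}"
proof -
  define F where "F = (\<lambda>z::complex. - exp ((of_real T - z) * l) / l)"
  have d: "(F has_field_derivative exp ((of_real T - z) * l)) (at z)" for z
    unfolding F_def using l
    by (auto intro!: derivative_eq_intros simp: field_simps)
  have "((\<lambda>s. exp ((of_real T - of_real s) * l)) has_integral (F (of_real (j+1)) - F (of_real j))) {j..j+1}"
    by (rule fundamental_theorem_of_calculus) (auto intro!: has_vector_derivative_real_field d)
  moreover have "F (of_real (j+1)) - F (of_real j) = exp (of_real (T - j - 1) * l) * ((exp l - 1) / l)"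
  proof -
    have "exp ((of_real T - of_real j) * l) = exp (of_real (T - j - 1) * l) * exp l"
      by (simp add: exp_add[symmetric] algebra_simps)
    then show ?thesis using l by (simp add: F_def field_simps)
  qed
  ultimately show ?thesis by simp
qed

lemma pw_has_integral:
  fixes F :: "real \<Rightarrow> complex"
  assumes g: "\<And>j. j < n \<Longrightarrow> (g j has_integral I j) {real j..real j + 1}"
    and eq: "\<And>s j. j < n \<Longrightarrow> s \<in> {real j..<real j + 1} \<Longrightarrow> F s = g j s"
  shows "(F has_integral (\<Sum>j<n. I j)) {0..real n}"
  using g eq
proof (induction n)
  case 0
  then show ?case by (auto intro: has_integral_refl)
next
  case (Suc n)
  have ih: "(F has_integral (\<Sum>j<n. I j)) {0..real n}"
    using Suc.prems by (intro Suc.IH) auto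
  have p: "(F has_integral I n) {real n..real n + 1}"
  proof (rule has_integral_spike_finite[of "{real n + 1}"])
    show "(g n has_integral I n) {real n..real n + 1}" using Suc.prems(1) by simp
    fix x assume "x \<in> {real n..real n + 1} - {real n + 1}"
    then show "F x = g n x" using Suc.prems(2)[of n x] by auto
  qed simp
  show ?case
    using has_integral_combine[OF _ _ ih, of "real (Suc n)"] p by (simp add: add.commute)
qed

definition pwin :: "nat \<Rightarrow> (nat \<Rightarrow> complex) \<Rightarrow> real \<Rightarrow> complex" where
  "pwin m a s = a (m - 1 - nat \<lfloor>s\<rfloor>)"

lemma pwin_on: "s \<in> {real j..<real j + 1} \<Longrightarrow> pwin m a s = a (m - 1 - j)"
proof -
  assume "s \<in> {real j..<real j + 1}"
  then have "\<lfloor>s\<rfloor> = int j" by (intro floor_unique) auto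
  then show ?thesis by (simp add: pwin_def)
qed

lemma pwin_integral:
  fixes l :: complex
  assumes l: "l \<noteq> 0"
  shows "((\<lambda>s. pwin m a s * exp (of_real (real m - s) * l)) has_integral
           ((exp l - 1) / l * (\<Sum>i<m. a i * exp l ^ i))) {0..real m}"
proof -
  have "((\<lambda>s. pwin m a s * exp (of_real (real m - s) * l)) has_integral
      (\<Sum>j<m. a (m - 1 - j) * (exp (of_real (real m - real j - 1) * l) * ((exp l - 1) / l)))) {0..real m}"
  proof (rule pw_has_integral)
    fix j assume "j < m"
    show "((\<lambda>s. a (m - 1 - j) * exp (of_real (real m - s) * l)) has_integral
        a (m - 1 - j) * (exp (of_real (real m - real j - 1) * l) * ((exp l - 1) / l))) {real j..real j + 1}"
      by (intro has_integral_mult_right piece_integral l)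
  next
    fix s j assume "j < m" "s \<in> {real j..<real j + 1}"
    then show "pwin m a s * exp (of_real (real m - s) * l) = a (m - 1 - j) * exp (of_real (real m - s) * l)"
      by (simp add: pwin_on)
  qed
  also have "(\<Sum>j<m. a (m - 1 - j) * (exp (of_real (real m - real j - 1) * l) * ((exp l - 1) / l)))
      = (\<Sum>j<m. a (m - Suc j) * exp l ^ (m - Suc j)) * ((exp l - 1) / l)"
  proof -
    have "exp (of_real (real m - real j - 1) * l) = exp l ^ (m - Suc j)" if "j < m" for j
    proof -
      have "of_real (real m - real j - 1) = (of_nat (m - Suc j) :: complex)"
        using that by (simp add: of_nat_diff)
      then show ?thesis by (simp add: exp_of_nat_mult[symmetric])
    qed
    then have "(\<Sum>j<m. a (m - 1 - j) * (exp (of_real (real m - real j - 1) * l) * ((exp l - 1) / l)))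
      = (\<Sum>j<m. (a (m - Suc j) * exp l ^ (m - Suc j)) * ((exp l - 1) / l))"
      by (intro sum.cong refl) (simp only: lessThan_iff mult.assoc diff_diff_left Suc_eq_plus1 add.commute)
    then show ?thesis
      by (simp only: sum_distrib_right)
  qed
  also have "\<dots> = (exp l - 1) / l * (\<Sum>i<m. a i * exp l ^ i)"
    by (subst sum.nat_diff_reindex) (simp add: mult.commute)
  finally show ?thesis .
qed

lemma pwin_abs_int:
  "pwin m a absolutely_integrable_on {0..real m}"
proof (rule absolutely_integrable_integrable_bound)
  show "norm (pwin m a x) \<le> (\<Sum>i\<le>m. norm (a i))" for x
    unfolding pwin_def by (rule member_le_sum) auto
  show "(\<lambda>_. \<Sum>i\<le>m. norm (a i)) integrable_on {0..real m}"
    by (rule integrable_const_ivl)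
  have "((\<lambda>s. pwin m a s * 1) has_integral (\<Sum>j<m. a (m - 1 - j) * 1)) {0..real m}"
  proof (rule pw_has_integral)
    fix j assume "j < m"
    show "((\<lambda>s. a (m - 1 - j) * 1) has_integral a (m - 1 - j) * 1) {real j..real j + 1}"
      using has_integral_const_real[of "a (m - 1 - j)" "real j" "real j + 1"] by simp
  next
    fix s j assume "j < m" "s \<in> {real j..<real j + 1}"
    then show "pwin m a s * 1 = a (m - 1 - j) * 1" by (simp add: pwin_on)
  qed
  then show "pwin m a integrable_on {0..real m}" by (auto simp: integrable_on_def)
qed


lemma dt_achieve:
  fixes H :: "real \<Rightarrow> complex"
  assumes "compact K" "continuous_on K H" "\<delta> > 0"
  shows "\<exists>T w. \<forall>x\<in>K. norm ((\<Sum>j<T. w (T - 1 - j) * of_real x ^ j) - H x) < \<delta>"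
proof -
  obtain a n where a: "\<forall>x\<in>K. norm (H x - (\<Sum>i\<le>n. a i * of_real x ^ i)) < \<delta>"
    using poly_approx[OF assms] by blast
  have "(\<Sum>j<Suc n. (\<lambda>i. a (n - i)) (Suc n - 1 - j) * of_real x ^ j) = (\<Sum>i\<le>n. a i * of_real x ^ i)" for x :: real
    by (simp only: lessThan_Suc_atMost) (intro sum.cong refl, simp)
  then show ?thesis
  proof (intro exI[of _ "Suc n"] exI[of _ "\<lambda>i. a (n - i)"] ballI)
    fix x assume "x \<in> K"
    moreover note eq = \<open>\<And>x. (\<Sum>j<Suc n. (\<lambda>i. a (n - i)) (Suc n - 1 - j) * of_real x ^ j) = (\<Sum>i\<le>n. a i * of_real x ^ i)\<close>
    ultimately show "norm ((\<Sum>j<Suc n. a (n - (Suc n - 1 - j)) * of_real x ^ j) - H x) < \<delta>"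
      using a by (simp only: eq norm_minus_commute)
  qed
qed

lemma ct_achieve:
  fixes H :: "real \<Rightarrow> complex"
  assumes K: "compact K" and pos: "\<And>x. x \<in> K \<Longrightarrow> x > 0" and H: "continuous_on K H" and d: "\<delta> > 0"
  shows "\<exists>m a. m > 0 \<and> (\<forall>x\<in>K. norm ((exp (of_real x) - 1) / of_real x * (\<Sum>i<m. a i * exp (of_real x) ^ i) - H x) < \<delta>)"
proof -
  define phi where "phi = (\<lambda>x::real. (exp (complex_of_real x) - 1) / complex_of_real x)"
  have phinz: "phi x \<noteq> 0" if "x > 0" for x
  proof -
    have "exp x \<noteq> 1" using that by simp
    then have "exp (complex_of_real x) \<noteq> 1" by (metis exp_of_real of_real_eq_1_iff)
    then show ?thesis using that by (simp add: phi_def)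
  qed
  have cphi: "continuous_on K phi"
    unfolding phi_def using pos by (intro continuous_intros) auto
  obtain Phi where Phi: "\<forall>x\<in>K. norm (phi x) \<le> Phi"
    using compact_imp_bounded[OF compact_continuous_image[OF cphi K]] by (auto simp: bounded_iff)
  define Phi' where "Phi' = \<bar>Phi\<bar> + 1"
  have Phi'pos: "Phi' > 0" by (simp add: Phi'_def)
  define W where "W = exp ` K"
  have W: "compact W" unfolding W_def by (intro compact_continuous_image continuous_intros K)
  define G where "G = (\<lambda>w. H (ln w) / phi (ln w))"
  have cG: "continuous_on W G"
  proof -
    have lnW: "ln ` W = K" by (auto simp: W_def image_image)
    have cl: "continuous_on W ln" by (intro continuous_intros) (auto simp: W_def)
    have "continuous_on W (\<lambda>w. H (ln w))" by (rule continuous_on_compose2[OF H cl]) (use lnW in auto)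
    moreover have "continuous_on W (\<lambda>w. phi (ln w))" by (rule continuous_on_compose2[OF cphi cl]) (use lnW in auto)
    ultimately show ?thesis unfolding G_def
      by (intro continuous_on_divide) (auto simp: W_def phinz pos)
  qed
  obtain a n where a: "\<forall>w\<in>W. norm (G w - (\<Sum>i\<le>n. a i * of_real w ^ i)) < \<delta> / Phi'"
    using poly_approx[OF W cG] d Phi'pos by (metis divide_pos_pos)
  show ?thesis
  proof (intro exI conjI ballI)
    show "Suc n > 0" by simp
    fix x assume x: "x \<in> K"
    have ew: "exp x \<in> W" using x by (simp add: W_def)
    have s: "(\<Sum>i<Suc n. a i * exp (complex_of_real x) ^ i) = (\<Sum>i\<le>n. a i * of_real (exp x) ^ i)"
      by (simp only: lessThan_Suc_atMost exp_of_real)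
    have Gx: "phi x * G (exp x) = H x" using phinz[OF pos[OF x]] by (simp add: G_def)
    have e1: "phi x * (\<Sum>i<Suc n. a i * exp (complex_of_real x) ^ i) - H x
        = phi x * ((\<Sum>i\<le>n. a i * of_real (exp x) ^ i) - G (exp x))"
      by (simp only: Gx[symmetric] s right_diff_distrib)
    have "norm (phi x * (\<Sum>i<Suc n. a i * exp (complex_of_real x) ^ i) - H x)
        = norm (phi x) * norm (G (exp x) - (\<Sum>i\<le>n. a i * of_real (exp x) ^ i))"
      unfolding e1 norm_mult by (simp add: norm_minus_commute)
    also have "\<dots> \<le> Phi' * norm (G (exp x) - (\<Sum>i\<le>n. a i * of_real (exp x) ^ i))"
      using Phi x by (intro mult_right_mono) (auto simp: Phi'_def)
    also have "\<dots> < Phi' * (\<delta> / Phi')"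
      using a ew Phi'pos by (intro mult_strict_left_mono) auto
    also have "\<dots> = \<delta>" using Phi'pos by simp
    finally show "norm ((exp (of_real x) - 1) / of_real x * (\<Sum>i<Suc n. a i * exp (of_real x) ^ i) - H x) < \<delta>"
      by (simp add: phi_def)
  qed
qed


lemma continuous_on_mat:
  assumes "continuous_on S c"
  shows "continuous_on S (\<lambda>x. mat (c x) :: complex^'n^'n)"
proof -
  have "continuous_on S (\<lambda>x. (\<chi> i j. if i = j then c x else 0) :: complex^'n^'n)"
  proof (intro continuous_on_vec_lambda)
    fix i j :: 'n show "continuous_on S (\<lambda>x. if i = j then c x else 0)"
      by (cases "i = j") (auto intro: assms)
  qed
  then show ?thesis by (simp add: mat_def)
qed

lemma continuous_on_transpose:
  assumes "continuous_on S M"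
  shows "continuous_on S (\<lambda>x. transpose (M x) :: complex^'n^'n)"
  unfolding transpose_def by (intro continuous_on_vec_lambda continuous_intros assms)

locale mainctx =
  fixes P :: "complex set" and \<gamma> :: "real \<Rightarrow> complex" and tinv :: "complex \<Rightarrow> real"
    and A :: "complex \<Rightarrow> complex^'n^'n" and b :: "complex \<Rightarrow> complex^'n"
    and idx :: "'n \<Rightarrow> nat" and L :: real
  assumes hom: "homeomorphism {0..1} P \<gamma> tinv"
    and cA: "continuous_on P A" and cb: "continuous_on P b"
    and reach: "\<forall>\<theta>\<in>P. reachable_pair (A \<theta>) (b \<theta>)"
    and inj_idx: "inj idx" and L1: "L \<ge> 1" and LA: "\<forall>\<theta>\<in>P. nrm1 (A \<theta>) < L"
begin

definition lam :: "complex \<Rightarrow> 'n \<Rightarrow> complex" where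
  "lam \<theta> k = complex_of_real (L + 2 * real (idx k) + tinv \<theta>)"

definition K :: "real set" where
  "K = (\<Union>k. {L + 2 * real (idx k) .. L + 2 * real (idx k) + 1})"

lemma tinv_range: "\<theta> \<in> P \<Longrightarrow> tinv \<theta> \<in> {0..1}"
  using hom by (auto simp: homeomorphism_def)

lemma gamma_tinv: "\<theta> \<in> P \<Longrightarrow> \<gamma> (tinv \<theta>) = \<theta>"
  using hom by (auto simp: homeomorphism_def)

lemma gamma_range: "\<tau> \<in> {0..1} \<Longrightarrow> \<gamma> \<tau> \<in> P"
  using hom by (auto simp: homeomorphism_def)

lemma cont_tinv: "continuous_on P tinv"
  using hom by (auto simp: homeomorphism_def)

lemma cont_gamma: "continuous_on {0..1} \<gamma>"
  using hom by (auto simp: homeomorphism_def)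

lemma P_compact: "compact P"
proof -
  have "P = \<gamma> ` {0..1}" using hom by (auto simp: homeomorphism_def)
  then show ?thesis using compact_continuous_image[OF cont_gamma] by simp
qed

lemma K_compact: "compact K"
  unfolding K_def by (intro compact_UN) auto

lemma K_pos: "x \<in> K \<Longrightarrow> x > 0"
  using L1 by (auto simp: K_def)

lemma in_K: "\<theta> \<in> P \<Longrightarrow> L + 2 * real (idx k) + tinv \<theta> \<in> K"
  using tinv_range[of \<theta>] unfolding K_def by (intro UN_I[of k]) auto

lemma setting_at: "\<theta> \<in> P \<Longrightarrow> setting (A \<theta>) (b \<theta>) (lam \<theta>)"
proof unfold_locales
  assume th: "\<theta> \<in> P"
  show "reachable_pair (A \<theta>) (b \<theta>)" using reach th by blast
  show "inj (lam \<theta>)"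
  proof (rule injI)
    fix k k' assume "lam \<theta> k = lam \<theta> k'"
    then have "idx k = idx k'" by (simp add: lam_def)
    then show "k = k'" using inj_idx by (simp add: inj_def)
  qed
  fix k
  have "norm (lam \<theta> k) = \<bar>L + 2 * real (idx k) + tinv \<theta>\<bar>"
    by (simp only: lam_def norm_of_real)
  then have "norm (lam \<theta> k) = L + 2 * real (idx k) + tinv \<theta>"
    using tinv_range[OF th] L1 by simp
  then show "nrm1 (A \<theta>) < norm (lam \<theta> k)"
    using LA th tinv_range[OF th] by force
qed

lemma cont_lam: "continuous_on P (\<lambda>\<theta>. lam \<theta> k)"
  unfolding lam_def by (intro continuous_intros cont_tinv)

lemma cont_u: "continuous_on P (\<lambda>\<theta>. uu (A \<theta>) (b \<theta>) (lam \<theta>) k)"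
  unfolding uu_def
proof (rule continuous_on_solve)
  show "continuous_on P (\<lambda>\<theta>. A \<theta> - mat (lam \<theta> k))"
    by (intro continuous_intros cA continuous_on_mat cont_lam)
  show "continuous_on P b" by (rule cb)
  fix \<theta> assume th: "\<theta> \<in> P"
  show "det (A \<theta> - mat (lam \<theta> k)) \<noteq> 0"
    using setting.big[OF setting_at[OF th]] by (rule det_shift_nz)
qed

lemma cont_U: "continuous_on P (\<lambda>\<theta>. UU (A \<theta>) (b \<theta>) (lam \<theta>))"
  unfolding UU_def by (intro continuous_on_vec_lambda continuous_intros cont_u)

lemma cont_f: "continuous_on P (\<lambda>\<theta>. ff (A \<theta>) (b \<theta>) (lam \<theta>))"
  unfolding ff_def
  by (rule continuous_on_solve) (auto intro: continuous_on_transpose cont_U continuous_intros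
      simp: setting.U_nz[OF setting_at])

lemma cont_mu: "continuous_on P (\<lambda>\<theta>. mm (A \<theta>) (b \<theta>) (lam \<theta>))"
  unfolding mm_def
  by (rule continuous_on_solve) (auto intro: cont_U cb simp: setting.U_nz[OF setting_at])

lemma approx:
  fixes E :: "'z \<Rightarrow> complex \<Rightarrow> 'n \<Rightarrow> complex" and Z :: "'z \<Rightarrow> bool"
  assumes g: "continuous_on P g" and e: "\<epsilon> > 0"
    and ach: "\<And>H \<delta>. continuous_on K H \<Longrightarrow> \<delta> > 0 \<Longrightarrow>
       \<exists>z. Z z \<and> (\<forall>\<theta>\<in>P. \<forall>k. norm (E z \<theta> k - H (L + 2 * real (idx k) + tinv \<theta>)) < \<delta>)"
  shows "\<exists>z. Z z \<and> (\<forall>\<theta>\<in>P. norm ((\<Sum>k\<in>UNIV. (mm (A \<theta>) (b \<theta>) (lam \<theta>) $ k * E z \<theta> k) *s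
             uu (A \<theta>) (b \<theta>) (lam \<theta>) k) - g \<theta>) \<le> \<epsilon> / 2)"
proof -
  define u where "u = (\<lambda>\<theta> k. uu (A \<theta>) (b \<theta>) (lam \<theta>) k)"
  define mu where "mu = (\<lambda>\<theta>. mm (A \<theta>) (b \<theta>) (lam \<theta>))"
  define cc where "cc = (\<lambda>\<theta>. solve (UU (A \<theta>) (b \<theta>) (lam \<theta>)) (g \<theta>))"
  have ccc: "continuous_on P cc"
    unfolding cc_def
    by (rule continuous_on_solve) (auto intro: cont_U g simp: setting.U_nz[OF setting_at])
  have gsum: "g \<theta> = (\<Sum>k\<in>UNIV. (cc \<theta> $ k) *s u \<theta> k)" if th: "\<theta> \<in> P" for \<theta>
    using solve_correct[OF setting.U_nz[OF setting_at[OF th]], of "g \<theta>"]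
    by (simp add: UU_mv cc_def u_def)
  define h where "h = (\<lambda>k \<theta>. cc \<theta> $ k / mu \<theta> $ k)"
  have muz: "\<theta> \<in> P \<Longrightarrow> mu \<theta> $ k \<noteq> 0" for \<theta> k
    unfolding mu_def using setting.mu_nz[OF setting_at] by blast
  have ch: "continuous_on P (h k)" for k
    unfolding h_def using muz
    by (intro continuous_on_divide continuous_intros ccc cont_mu[unfolded mu_def[symmetric]]) auto
  have cC: "continuous_on P (\<lambda>\<theta>. \<Sum>k\<in>UNIV. norm (mu \<theta> $ k) * norm (u \<theta> k))"
    unfolding mu_def u_def by (intro continuous_intros cont_mu cont_u)
  obtain C where C: "\<forall>\<theta>\<in>P. norm (\<Sum>k\<in>UNIV. norm (mu \<theta> $ k) * norm (u \<theta> k)) \<le> C"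
    using compact_imp_bounded[OF compact_continuous_image[OF cC P_compact]] by (auto simp: bounded_iff)
  define C' where "C' = \<bar>C\<bar> + 1"
  have C'pos: "C' > 0" by (simp add: C'_def)
  have C'b: "(\<Sum>k\<in>UNIV. norm (mu \<theta> $ k) * norm (u \<theta> k)) \<le> C'" if "\<theta> \<in> P" for \<theta>
    using C that by (force simp: C'_def)
  have cgl: "continuous_on {0..1} (\<lambda>\<tau>. h k (\<gamma> \<tau>))" for k
    by (rule continuous_on_compose2[OF ch cont_gamma]) (auto intro: gamma_range)
  obtain Hf where Hf: "continuous_on K Hf"
    and Hfe: "\<forall>k. \<forall>\<tau>\<in>{0..1}. Hf (L + 2 * real (idx k) + \<tau>) = h k (\<gamma> \<tau>)"
    using glue[of idx "\<lambda>k \<tau>. h k (\<gamma> \<tau>)" L] inj_idx cgl unfolding K_def by blast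
  define \<delta> where "\<delta> = \<epsilon> / (2 * C')"
  have dpos: "\<delta> > 0" using e C'pos by (simp add: \<delta>_def)
  obtain z where Zz: "Z z" and z: "\<forall>\<theta>\<in>P. \<forall>k. norm (E z \<theta> k - Hf (L + 2 * real (idx k) + tinv \<theta>)) < \<delta>"
    using ach[OF Hf dpos] by blast
  show ?thesis
  proof (rule exI[of _ z], intro conjI ballI Zz)
    fix \<theta> assume th: "\<theta> \<in> P"
    have hk: "Hf (L + 2 * real (idx k) + tinv \<theta>) = h k \<theta>" for k
      using Hfe tinv_range[OF th] gamma_tinv[OF th] by auto
    have ccm: "cc \<theta> $ k = mu \<theta> $ k * h k \<theta>" for k
      using muz[OF th] by (simp add: h_def)
    have "(\<Sum>k\<in>UNIV. (mu \<theta> $ k * E z \<theta> k) *s u \<theta> k) - g \<theta>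
        = (\<Sum>k\<in>UNIV. (mu \<theta> $ k * (E z \<theta> k - h k \<theta>)) *s u \<theta> k)"
      by (simp add: gsum[OF th] ccm sum_subtractf[symmetric] vector_ssub_ldistrib[symmetric]
          algebra_simps vec_eq_iff)
    then have "norm ((\<Sum>k\<in>UNIV. (mu \<theta> $ k * E z \<theta> k) *s u \<theta> k) - g \<theta>)
       \<le> (\<Sum>k\<in>UNIV. norm (mu \<theta> $ k) * norm (E z \<theta> k - h k \<theta>) * norm (u \<theta> k))"
      by (auto intro!: order.trans[OF norm_sum] simp: norm_smult_vec norm_mult)
    also have "\<dots> \<le> (\<Sum>k\<in>UNIV. norm (mu \<theta> $ k) * \<delta> * norm (u \<theta> k))"
      using z th hk by (intro sum_mono mult_right_mono mult_left_mono) (auto simp: less_imp_le)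
    also have "\<dots> = \<delta> * (\<Sum>k\<in>UNIV. norm (mu \<theta> $ k) * norm (u \<theta> k))"
      by (simp add: sum_distrib_left mult_ac)
    also have "\<dots> \<le> \<delta> * C'"
      using C'b[OF th] dpos by (intro mult_left_mono) auto
    also have "\<dots> = \<epsilon> / 2" using C'pos by (simp add: \<delta>_def)
    finally show "norm ((\<Sum>k\<in>UNIV. (mm (A \<theta>) (b \<theta>) (lam \<theta>) $ k * E z \<theta> k) *s
             uu (A \<theta>) (b \<theta>) (lam \<theta>) k) - g \<theta>) \<le> \<epsilon> / 2"
      by (simp add: mu_def u_def)
  qed
qed

end


lemma SUP_lt:
  assumes "S \<noteq> {}" "\<And>x. x \<in> S \<Longrightarrow> (F x :: real) \<le> e / 2" "e > 0"
  shows "(SUP x\<in>S. F x) < e"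
proof -
  have "(SUP x\<in>S. F x) \<le> e / 2" using assms by (intro cSUP_least) auto
  then show ?thesis using assms(3) by simp
qed

context mainctx
begin

lemma P_ne: "P \<noteq> {}"
  using gamma_range[of 0] by auto

lemma UER_dt_main: "UER_dt P (\<lambda>\<theta>. A \<theta> + outer (b \<theta>) (ff (A \<theta>) (b \<theta>) (lam \<theta>))) b"
  unfolding UER_dt_def
proof (intro allI impI)
  fix g :: "complex \<Rightarrow> complex^'n" and \<epsilon> :: real
  assume g: "continuous_on P g" and e: "\<epsilon> > 0"
  define E where "E = (\<lambda>(z::nat \<times> (nat \<Rightarrow> complex)) \<theta> k. \<Sum>j<fst z. snd z (fst z - 1 - j) * lam \<theta> k ^ j)"
  have "\<exists>z. True \<and> (\<forall>\<theta>\<in>P. norm ((\<Sum>k\<in>UNIV. (mm (A \<theta>) (b \<theta>) (lam \<theta>) $ k * E z \<theta> k) *s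
             uu (A \<theta>) (b \<theta>) (lam \<theta>) k) - g \<theta>) \<le> \<epsilon> / 2)"
  proof (rule approx[OF g e])
    fix H :: "real \<Rightarrow> complex" and \<delta> :: real
    assume H: "continuous_on K H" and d: "\<delta> > 0"
    obtain T w where Tw: "\<forall>x\<in>K. norm ((\<Sum>j<T. w (T - 1 - j) * of_real x ^ j) - H x) < \<delta>"
      using dt_achieve[OF K_compact H d] by blast
    show "\<exists>z. True \<and> (\<forall>\<theta>\<in>P. \<forall>k. norm (E z \<theta> k - H (L + 2 * real (idx k) + tinv \<theta>)) < \<delta>)"
    proof (rule exI[of _ "(T, w)"], intro conjI TrueI ballI allI)
      fix \<theta> k assume th: "\<theta> \<in> P"
      show "norm (E (T, w) \<theta> k - H (L + 2 * real (idx k) + tinv \<theta>)) < \<delta>"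
        using Tw[rule_format, OF in_K[OF th, of k]] by (simp only: E_def lam_def fst_conv snd_conv)
    qed
  qed
  then obtain T w where Tw: "\<forall>\<theta>\<in>P. norm ((\<Sum>k\<in>UNIV. (mm (A \<theta>) (b \<theta>) (lam \<theta>) $ k * E (T, w) \<theta> k) *s
             uu (A \<theta>) (b \<theta>) (lam \<theta>) k) - g \<theta>) \<le> \<epsilon> / 2"
    by auto
  show "\<exists>T u. (SUP \<theta>\<in>P. norm (dt_endpoint (A \<theta> + outer (b \<theta>) (ff (A \<theta>) (b \<theta>) (lam \<theta>))) (b \<theta>) T u - g \<theta>)) < \<epsilon>"
  proof (intro exI SUP_lt[OF P_ne _ e])
    fix \<theta> assume th: "\<theta> \<in> P"
    show "norm (dt_endpoint (A \<theta> + outer (b \<theta>) (ff (A \<theta>) (b \<theta>) (lam \<theta>))) (b \<theta>) T w - g \<theta>) \<le> \<epsilon> / 2"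
      using Tw th setting.dt_formula[OF setting_at[OF th], of T w] by (simp add: E_def)
  qed
qed

lemma lam_nz: "\<theta> \<in> P \<Longrightarrow> lam \<theta> k \<noteq> 0"
  unfolding lam_def using K_pos[OF in_K, of \<theta> k] by (metis of_real_eq_0_iff less_irrefl)

lemma UER_ct_main: "UER_ct P (\<lambda>\<theta>. A \<theta> + outer (b \<theta>) (ff (A \<theta>) (b \<theta>) (lam \<theta>))) b"
  unfolding UER_ct_def
proof (intro allI impI)
  fix g :: "complex \<Rightarrow> complex^'n" and \<epsilon> :: real
  assume g: "continuous_on P g" and e: "\<epsilon> > 0"
  define E where "E = (\<lambda>(z::nat \<times> (nat \<Rightarrow> complex)) \<theta> k.
     integral {0..real (fst z)} (\<lambda>s. pwin (fst z) (snd z) s * exp (of_real (real (fst z) - s) * lam \<theta> k)))"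
  have "\<exists>z. fst z > 0 \<and> (\<forall>\<theta>\<in>P. norm ((\<Sum>k\<in>UNIV. (mm (A \<theta>) (b \<theta>) (lam \<theta>) $ k * E z \<theta> k) *s
             uu (A \<theta>) (b \<theta>) (lam \<theta>) k) - g \<theta>) \<le> \<epsilon> / 2)"
  proof (rule approx[OF g e])
    fix H :: "real \<Rightarrow> complex" and \<delta> :: real
    assume H: "continuous_on K H" and d: "\<delta> > 0"
    obtain m a where m: "m > 0" and ma: "\<forall>x\<in>K. norm ((exp (of_real x) - 1) / of_real x * (\<Sum>i<m. a i * exp (of_real x) ^ i) - H x) < \<delta>"
      using ct_achieve[OF K_compact K_pos H d] by blast
    show "\<exists>z. fst z > 0 \<and> (\<forall>\<theta>\<in>P. \<forall>k. norm (E z \<theta> k - H (L + 2 * real (idx k) + tinv \<theta>)) < \<delta>)"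
    proof (rule exI[of _ "(m, a)"], intro conjI ballI allI)
      show "fst (m, a) > 0" using m by simp
      fix \<theta> k assume th: "\<theta> \<in> P"
      have Eq: "E (m, a) \<theta> k = (exp (lam \<theta> k) - 1) / lam \<theta> k * (\<Sum>i<m. a i * exp (lam \<theta> k) ^ i)"
        unfolding E_def fst_conv snd_conv using pwin_integral[OF lam_nz[OF th], of m a] by (rule integral_unique)
      show "norm (E (m, a) \<theta> k - H (L + 2 * real (idx k) + tinv \<theta>)) < \<delta>"
        using ma[rule_format, OF in_K[OF th, of k]] unfolding Eq lam_def .
    qed
  qed
  then obtain m a where m: "m > 0" and ma: "\<forall>\<theta>\<in>P. norm ((\<Sum>k\<in>UNIV. (mm (A \<theta>) (b \<theta>) (lam \<theta>) $ k * E (m, a) \<theta> k) *s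
             uu (A \<theta>) (b \<theta>) (lam \<theta>) k) - g \<theta>) \<le> \<epsilon> / 2"
    by auto
  show "\<exists>T>0. \<exists>u. u absolutely_integrable_on {0..T} \<and>
      (SUP \<theta>\<in>P. norm (ct_endpoint (A \<theta> + outer (b \<theta>) (ff (A \<theta>) (b \<theta>) (lam \<theta>))) (b \<theta>) T u - g \<theta>)) < \<epsilon>"
  proof (intro exI[of _ "real m"] conjI exI[of _ "pwin m a"] pwin_abs_int SUP_lt[OF P_ne _ e])
    show "real m > 0" using m by simp
    fix \<theta> assume th: "\<theta> \<in> P"
    have int: "(\<lambda>s. pwin m a s * exp (of_real (real m - s) * lam \<theta> k)) integrable_on {0..real m}" for k
      using pwin_integral[OF lam_nz[OF th], of m a] by (auto simp: integrable_on_def)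
    show "norm (ct_endpoint (A \<theta> + outer (b \<theta>) (ff (A \<theta>) (b \<theta>) (lam \<theta>))) (b \<theta>) (real m) (pwin m a) - g \<theta>) \<le> \<epsilon> / 2"
      using ma th setting.ct_formula[OF setting_at[OF th], of "pwin m a" "real m", OF int] by (simp add: E_def)
  qed
qed

end

theorem mainTheorem2:
  fixes P :: "complex set"
    and A :: "complex \<Rightarrow> complex^'n^'n"
    and b :: "complex \<Rightarrow> complex^'n"
  assumes "\<exists>\<gamma>. arc \<gamma> \<and> P = path_image \<gamma>"
    and "continuous_on P A"
    and "continuous_on P b"
    and "\<forall>\<theta>\<in>P. reachable_pair (A \<theta>) (b \<theta>)"
  shows "(\<exists>f :: complex \<Rightarrow> complex^'n. continuous_on P f \<and>
            UER_ct P (\<lambda>\<theta>. A \<theta> + outer (b \<theta>) (f \<theta>)) b)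
       \<and> (\<exists>f :: complex \<Rightarrow> complex^'n. continuous_on P f \<and>
            UER_dt P (\<lambda>\<theta>. A \<theta> + outer (b \<theta>) (f \<theta>)) b)"
proof -
  obtain \<gamma> where arc: "arc \<gamma>" and P: "P = path_image \<gamma>" using assms(1) by blast
  obtain tinv where hom: "homeomorphism {0..1} P \<gamma> tinv"
    using homeomorphism_arc[OF arc] P by blast
  have cP: "compact P" using P arc by (simp add: compact_path_image arc_imp_path)
  have cn: "continuous_on P (\<lambda>\<theta>. nrm1 (A \<theta>))"
    unfolding nrm1_def by (intro continuous_intros assms(2))
  obtain B where B: "\<forall>\<theta>\<in>P. norm (nrm1 (A \<theta>)) \<le> B"
    using compact_imp_bounded[OF compact_continuous_image[OF cn cP]] by (auto simp: bounded_iff)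
  define L where "L = \<bar>B\<bar> + 1"
  have LA: "\<forall>\<theta>\<in>P. nrm1 (A \<theta>) < L" using B by (force simp: L_def)
  interpret mainctx P \<gamma> tinv A b "to_nat :: 'n \<Rightarrow> nat" L
    by unfold_locales (use hom assms(2-4) LA in \<open>auto simp: L_def\<close>)
  show ?thesis
    using cont_f UER_ct_main UER_dt_main by blast
qed

end
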